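(* Let $Y$ be a finite connected simple undirected graph with a cycle-edge $e=\{v,w\}$, and let $O\in\mathsf{Acyc}(Y)$ with $v\leq_O w$. Let $\mathbf{c}=c_1c_2\cdots c_m$ be a click-sequence for $O$ containing precisely one occurrence of $w$ and such that no vertex of $\mathcal{I}(O)$ occurs in $\mathbf{c}$ after that occurrence of $w$. Then there exists a click-sequence $\mathbf{c}'=c'_1c'_2\cdots c'_m$ for $O$ such that (i) there is an interval $[p,q]$ of integers with $c'_j\in\mathcal{I}(O)$ if and only if $p\leq j\leq q$, and (ii) $\mathbf{c}(O)=\mathbf{c}'(O)$.
   Context: $\mathsf{Acyc}(Y)$ is the set of acyclic orientations; $i\leq_O j$ iff there is a directed path from $i$ to $j$ in $O$. $\mathcal{I}(O)=\{a: v\leq_O a\leq_O w\}$ when $v\leq_O w$. A click at a vertex $x$ which is a source reverses all edges incident to $x$. A click-sequence for $O$ is a sequence of vertices $c_1,\dots,c_m$ such that for each $i$, $c_i$ is a source of the orientation obtained from $O$ by successively clicking $c_1,\dots,c_{i-1}$; $\mathbf{c}(O)$ denotes the resulting orientation after all $m$ clicks. *)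

theory Defs
  imports Main
begin

definition simple_graph :: "'a set \<Rightarrow> 'a set set \<Rightarrow> bool" where
  "simple_graph V E \<longleftrightarrow> finite V \<and> (\<forall>e\<in>E. \<exists>a b. e = {a, b} \<and> a \<in> V \<and> b \<in> V \<and> a \<noteq> b)"

definition adj_rel :: "'a set set \<Rightarrow> ('a \<times> 'a) set" where
  "adj_rel E = {(a, b). {a, b} \<in> E}"

definition connected_graph :: "'a set \<Rightarrow> 'a set set \<Rightarrow> bool" where
  "connected_graph V E \<longleftrightarrow> (\<forall>a\<in>V. \<forall>b\<in>V. (a, b) \<in> (adj_rel E)\<^sup>*)"

(* e = {v,w} is a cycle-edge: it lies on a cycle, i.e. v and w are joined by a path avoiding e *)
definition cycle_edge :: "'a set set \<Rightarrow> 'a \<Rightarrow> 'a \<Rightarrow> bool" where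
  "cycle_edge E v w \<longleftrightarrow> {v, w} \<in> E \<and> v \<noteq> w \<and> (v, w) \<in> (adj_rel (E - {{v, w}}))\<^sup>*"

definition orientation :: "'a set set \<Rightarrow> ('a \<times> 'a) set \<Rightarrow> bool" where
  "orientation E Ori \<longleftrightarrow> (\<forall>(a, b)\<in>Ori. {a, b} \<in> E) \<and>
     (\<forall>a b. {a, b} \<in> E \<longrightarrow> ((a, b) \<in> Ori \<longleftrightarrow> (b, a) \<notin> Ori))"

definition Acyc :: "'a set set \<Rightarrow> ('a \<times> 'a) set set" where
  "Acyc E = {Ori. orientation E Ori \<and> acyclic Ori}"

definition ord_le :: "('a \<times> 'a) set \<Rightarrow> 'a \<Rightarrow> 'a \<Rightarrow> bool" where
  "ord_le Ori i j \<longleftrightarrow> (i, j) \<in> Ori\<^sup>*"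

definition interval :: "('a \<times> 'a) set \<Rightarrow> 'a \<Rightarrow> 'a \<Rightarrow> 'a set" where
  "interval Ori v w = {a. ord_le Ori v a \<and> ord_le Ori a w}"

definition is_source :: "'a set \<Rightarrow> ('a \<times> 'a) set \<Rightarrow> 'a \<Rightarrow> bool" where
  "is_source V Ori x \<longleftrightarrow> x \<in> V \<and> (\<forall>y. (y, x) \<notin> Ori)"

definition click :: "'a \<Rightarrow> ('a \<times> 'a) set \<Rightarrow> ('a \<times> 'a) set" where
  "click x Ori = {(a, b). (a, b) \<in> Ori \<and> a \<noteq> x \<and> b \<noteq> x} \<union> {(b, a). (a, b) \<in> Ori \<and> (a = x \<or> b = x)}"

fun click_seq :: "'a set \<Rightarrow> ('a \<times> 'a) set \<Rightarrow> 'a list \<Rightarrow> bool" where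
  "click_seq V Ori [] = True"
| "click_seq V Ori (c # cs) = (is_source V Ori c \<and> click_seq V (click c Ori) cs)"

definition apply_clicks :: "'a list \<Rightarrow> ('a \<times> 'a) set \<Rightarrow> ('a \<times> 'a) set" where
  "apply_clicks cs Ori = fold click cs Ori"

end

theory Submission
  imports Defs
begin

definition cnt :: "'a \<Rightarrow> 'a list \<Rightarrow> nat" where
  "cnt x xs = length (filter (\<lambda>y. y = x) xs)"

lemma cnt_append[simp]: "cnt x (xs @ ys) = cnt x xs + cnt x ys"
  by (simp add: cnt_def)

lemma cnt_single[simp]: "cnt x [y] = (if y = x then 1 else 0)"
  by (simp add: cnt_def)

lemma cnt_zero: "cnt x xs = 0 \<longleftrightarrow> x \<notin> set xs"
  by (auto simp: cnt_def filter_empty_conv)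

lemma F_cnt: "a \<noteq> b \<Longrightarrow> length (filter (\<lambda>x. x = a \<or> x = b) xs) = cnt a xs + cnt b xs"
  by (induction xs) (auto simp: cnt_def)

lemma cnt_take_mono: "m \<le> m' \<Longrightarrow> cnt x (take m cs) \<le> cnt x (take m' cs)"
proof -
  assume "m \<le> m'"
  then have "take m' cs = take m cs @ take (m' - m) (drop m cs)"
    using take_add[of m "m' - m" cs] by simp
  then show ?thesis by simp
qed

lemma cnt_take_Suc: "s < length cs \<Longrightarrow> cnt x (take (Suc s) cs) = cnt x (take s cs) + (if cs ! s = x then 1 else 0)"
  by (simp add: take_Suc_conv_app_nth)

lemma mem_click: "(a,b) \<in> click x Q \<longleftrightarrow> (if x = a \<or> x = b then (b,a) \<in> Q else (a,b) \<in> Q)"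
  unfolding click_def by auto

lemma mem_fold_click:
  "(a,b) \<in> fold click xs Q \<longleftrightarrow>
    (if even (length (filter (\<lambda>x. x = a \<or> x = b) xs)) then (a,b) \<in> Q else (b,a) \<in> Q)"
proof (induction xs arbitrary: Q)
  case Nil then show ?case by simp
next
  case (Cons c xs)
  show ?case by (auto simp: Cons mem_click)
qed

lemma click_seq_iff:
  "click_seq V Q cs \<longleftrightarrow> (\<forall>t < length cs. is_source V (fold click (take t cs) Q) (cs ! t))"
proof (induction cs arbitrary: Q)
  case Nil then show ?case by simp
next
  case (Cons c cs)
  have "(\<forall>t < length (c # cs). is_source V (fold click (take t (c # cs)) Q) ((c # cs) ! t)) \<longleftrightarrow>
        is_source V Q c \<and> (\<forall>t < length cs. is_source V (fold click (take t cs) (click c Q)) (cs ! t))"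
    by (auto simp: less_Suc_eq_0_disj)
  then show ?case using Cons by simp
qed

lemma source_at:
  assumes "click_seq V Q cs" "t < length cs"
  shows "cs ! t \<in> V"
    "\<not> (if even (length (filter (\<lambda>x. x = y \<or> x = cs ! t) (take t cs))) then (y, cs ! t) \<in> Q else (cs ! t, y) \<in> Q)"
  using assms unfolding click_seq_iff is_source_def
  by (metis mem_fold_click)+

lemma filter_take_nth:
  assumes "distinct L" "i < length L" "G (L ! i)"
  shows "filter G (take i L) = takeWhile (\<lambda>x. x \<noteq> L ! i) (filter G L)"
proof -
  have L: "L = take i L @ L ! i # drop (Suc i) L" using assms(2) by (simp add: id_take_nth_drop)
  have nin: "L ! i \<notin> set (take i L)"
    using assms(1,2) by (auto simp: in_set_conv_nth nth_eq_iff_index_eq)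
  have "filter G L = filter G (take i L) @ L ! i # filter G (drop (Suc i) L)"
    using assms(3) by (subst L) simp
  moreover have "\<forall>x\<in>set (filter G (take i L)). x \<noteq> L ! i" using nin by auto
  ultimately show ?thesis by (simp add: takeWhile_append)
qed


lemma reorder:
  assumes cs: "click_seq V Q cs"
    and dL: "distinct L" and sL: "set L = {..<length cs}"
    and flt: "\<And>y c. y = c \<or> (y,c) \<in> Q \<or> (c,y) \<in> Q \<Longrightarrow>
       filter (\<lambda>t. cs!t = y \<or> cs!t = c) L = filter (\<lambda>t. cs!t = y \<or> cs!t = c) [0..<length cs]"
  shows "click_seq V Q (map (nth cs) L)" "fold click (map (nth cs) L) Q = fold click cs Q"
proof -
  have lenL: "length L = length cs"
    using distinct_card[OF dL] sL by simp
  have cnteq: "length (filter (\<lambda>x. x = a \<or> x = b) (map (nth cs) L)) =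
      length (filter (\<lambda>x. x = a \<or> x = b) cs)" for a b
  proof -
    have "length (filter (\<lambda>x. x = a \<or> x = b) (map (nth cs) L)) =
        length (filter (\<lambda>t. cs ! t = a \<or> cs ! t = b) L)"
      by (simp add: filter_map comp_def)
    also have "\<dots> = card ({t. cs ! t = a \<or> cs ! t = b} \<inter> set L)"
      by (rule distinct_length_filter[OF dL])
    also have "\<dots> = card ({t. cs ! t = a \<or> cs ! t = b} \<inter> set [0..<length cs])"
      using sL by (simp add: atLeast0LessThan)
    also have "\<dots> = length (filter (\<lambda>t. cs ! t = a \<or> cs ! t = b) [0..<length cs])"
      by (rule distinct_length_filter[symmetric]) simp
    also have "\<dots> = length (filter (\<lambda>x. x = a \<or> x = b) (map (nth cs) [0..<length cs]))"
      by (simp add: filter_map comp_def)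
    also have "\<dots> = length (filter (\<lambda>x. x = a \<or> x = b) cs)"
      by (simp add: map_nth)
    finally show ?thesis .
  qed
  show "fold click (map (nth cs) L) Q = fold click cs Q"
  proof (rule set_eqI)
    fix p :: "'a \<times> 'a"
    show "p \<in> fold click (map (nth cs) L) Q \<longleftrightarrow> p \<in> fold click cs Q"
      by (cases p) (simp only: mem_fold_click cnteq)
  qed
  show "click_seq V Q (map (nth cs) L)"
    unfolding click_seq_iff
  proof (intro allI impI)
    fix t' assume t': "t' < length (map (nth cs) L)"
    define t where "t = L ! t'"
    have tn: "t < length cs" using t' sL lenL nth_mem unfolding t_def by fastforce
    have eqc: "map (nth cs) L ! t' = cs ! t" using t' t_def by simp
    show "is_source V (fold click (take t' (map (nth cs) L)) Q) (map (nth cs) L ! t')"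
      unfolding is_source_def eqc
    proof (intro conjI allI)
      show "cs ! t \<in> V" using source_at(1)[OF cs tn] .
      fix y
      let ?c = "cs ! t"
      show "(y, ?c) \<notin> fold click (take t' (map (nth cs) L)) Q"
      proof (cases "y = ?c \<or> (y, ?c) \<in> Q \<or> (?c, y) \<in> Q")
        case False
        then show ?thesis by (auto simp: mem_fold_click)
      next
        case True
        let ?G = "\<lambda>t. cs!t = y \<or> cs!t = ?c"
        have "length (filter (\<lambda>x. x = y \<or> x = ?c) (take t' (map (nth cs) L))) =
              length (filter ?G (take t' L))"
          by (simp add: take_map filter_map comp_def)
        also have "\<dots> = length (takeWhile (\<lambda>x. x \<noteq> t) (filter ?G L))"
          using filter_take_nth[OF dL, of t' ?G] t' t_def by simp
        also have "\<dots> = length (takeWhile (\<lambda>x. x \<noteq> t) (filter ?G [0..<length cs]))"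
          using flt[OF True] by simp
        also have "\<dots> = length (filter ?G (take t [0..<length cs]))"
          using filter_take_nth[of "[0..<length cs]" t ?G] tn by simp
        also have "\<dots> = length (filter (\<lambda>x. x = y \<or> x = ?c) (take t cs))"
        proof -
          have "take t cs = map (nth cs) (take t [0..<length cs])"
            by (metis map_nth take_map)
          then show ?thesis by (simp add: filter_map comp_def)
        qed
        finally have e: "length (filter (\<lambda>x. x = y \<or> x = ?c) (take t' (map (nth cs) L))) =
            length (filter (\<lambda>x. x = y \<or> x = ?c) (take t cs))" .
        show ?thesis using source_at(2)[OF cs tn, of y] unfolding mem_fold_click e by simp
      qed
    qed
  qed
qed

lemma blocks_filter:
  assumes ord: "\<And>s t. s < t \<Longrightarrow> t < n \<Longrightarrow> G s \<Longrightarrow> G t \<Longrightarrow> cls s \<le> (cls t :: nat)"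
    and bnd: "\<And>t. cls t \<le> 2"
  shows "filter G (filter (\<lambda>t. cls t = 0) [0..<n] @ filter (\<lambda>t. cls t = 1) [0..<n] @
     filter (\<lambda>t. cls t = 2) [0..<n]) = filter G [0..<n]" (is "?l = ?r")
proof (rule sorted_distinct_set_unique)
  have cr: "x \<le> y" if "G x" "G y" "x < n" "y < n" "cls x < cls y" for x y
    using ord[of y x] that by (cases "y < x") auto
  show "sorted ?l"
    by (auto simp: sorted_append intro!: cr sorted_wrt_filter)
  show "distinct ?l" by auto
  show "sorted ?r" by (auto intro: sorted_wrt_filter)
  have h: "cls x = 0 \<or> cls x = 1 \<or> cls x = 2" for x using bnd[of x] by linarith
  show "set ?l = set ?r"
  proof (rule set_eqI)
    fix x show "x \<in> set ?l \<longleftrightarrow> x \<in> set ?r" using h[of x] by auto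
  qed
qed auto


locale cs_ctx =
  fixes V :: "'a set" and E :: "'a set set" and Ori :: "('a \<times> 'a) set" and cs :: "'a list"
  assumes ori: "orientation E Ori" and cs: "click_seq V Ori cs"
begin

lemma asym: "(a,b) \<in> Ori \<Longrightarrow> (b,a) \<notin> Ori"
  using ori unfolding orientation_def by blast

lemma irr: "(a,a) \<notin> Ori"
  using asym by blast

lemma parity_a:
  assumes ab: "(a,b) \<in> Ori" and t: "t < length cs" and ca: "cs ! t = a"
  shows "even (cnt a (take t cs) + cnt b (take t cs))"
proof -
  have ne: "a \<noteq> b" using ab irr by blast
  have "\<not> (if even (length (filter (\<lambda>x. x = b \<or> x = a) (take t cs))) then (b, a) \<in> Ori else (a, b) \<in> Ori)"
    using source_at(2)[OF cs t, of b] unfolding ca .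
  then show ?thesis using ab F_cnt[of b a] ne by (auto split: if_splits)
qed

lemma parity_b:
  assumes ab: "(a,b) \<in> Ori" and t: "t < length cs" and cb: "cs ! t = b"
  shows "odd (cnt a (take t cs) + cnt b (take t cs))"
proof -
  have ne: "a \<noteq> b" using ab irr by blast
  have "\<not> (if even (length (filter (\<lambda>x. x = a \<or> x = b) (take t cs))) then (a, b) \<in> Ori else (b, a) \<in> Ori)"
    using source_at(2)[OF cs t, of a] unfolding cb .
  then show ?thesis using ab F_cnt[of a b] ne by (auto split: if_splits)
qed

lemma inv:
  assumes ab: "(a,b) \<in> Ori"
  shows "t \<le> length cs \<Longrightarrow> cnt b (take t cs) \<le> cnt a (take t cs) \<and> cnt a (take t cs) \<le> cnt b (take t cs) + 1"
proof (induction t)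
  case 0 then show ?case by (simp add: cnt_def)
next
  case (Suc t)
  have t: "t < length cs" using Suc.prems by simp
  have ne: "a \<noteq> b" using ab irr by blast
  have IH: "cnt b (take t cs) \<le> cnt a (take t cs) \<and> cnt a (take t cs) \<le> cnt b (take t cs) + 1"
    using Suc by simp
  show ?case
  proof (cases "cs ! t = a")
    case True
    then have "even (cnt a (take t cs) + cnt b (take t cs))" using parity_a[OF ab t] by simp
    then have "cnt a (take t cs) = cnt b (take t cs)" using IH by presburger
    then show ?thesis using True ne by (simp add: cnt_take_Suc[OF t])
  next
    case False
    show ?thesis
    proof (cases "cs ! t = b")
      case True
      then have "odd (cnt a (take t cs) + cnt b (take t cs))" using parity_b[OF ab t] by simp
      then have "cnt a (take t cs) = cnt b (take t cs) + 1" using IH by presburger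
      then show ?thesis using True ne by (simp add: cnt_take_Suc[OF t])
    next
      case False2: False
      then show ?thesis using False IH by (simp add: cnt_take_Suc[OF t])
    qed
  qed
qed

lemma at_a:
  assumes ab: "(a,b) \<in> Ori" and t: "t < length cs" and ca: "cs ! t = a"
  shows "cnt a (take t cs) = cnt b (take t cs)"
  using parity_a[OF assms] inv[OF ab, of t] t by presburger

lemma at_b:
  assumes ab: "(a,b) \<in> Ori" and t: "t < length cs" and cb: "cs ! t = b"
  shows "cnt a (take t cs) = cnt b (take t cs) + 1"
  using parity_b[OF assms] inv[OF ab, of t] t by presburger

definition occ :: "nat \<Rightarrow> nat" where "occ t = cnt (cs ! t) (take t cs)"

lemma step_same: "s < t \<Longrightarrow> t < length cs \<Longrightarrow> cs ! s = cs ! t \<Longrightarrow> occ s < occ t"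
  unfolding occ_def
  using cnt_take_mono[of "Suc s" t "cs ! t" cs] cnt_take_Suc[of s cs "cs ! t"] by simp

lemma step_fwd: "s < t \<Longrightarrow> t < length cs \<Longrightarrow> (cs ! s, cs ! t) \<in> Ori \<Longrightarrow> occ s \<le> occ t"
  unfolding occ_def
  using at_a[of "cs ! s" "cs ! t" s] at_b[of "cs ! s" "cs ! t" t]
    cnt_take_mono[of "Suc s" t "cs ! s" cs] cnt_take_Suc[of s cs "cs ! s"] by simp

lemma step_bwd: "s < t \<Longrightarrow> t < length cs \<Longrightarrow> (cs ! t, cs ! s) \<in> Ori \<Longrightarrow> occ s < occ t"
  unfolding occ_def
  using at_b[of "cs ! t" "cs ! s" s] at_a[of "cs ! t" "cs ! s" t]
    cnt_take_mono[of "Suc s" t "cs ! s" cs] cnt_take_Suc[of s cs "cs ! s"] by simp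

definition R :: "(nat \<times> nat) set" where
  "R = {(s,t). s < t \<and> t < length cs \<and> (cs ! s = cs ! t \<or> (cs ! s, cs ! t) \<in> Ori \<or> (cs ! t, cs ! s) \<in> Ori)}"

lemma R_step: "(s,t) \<in> R \<Longrightarrow> occ s \<le> occ t"
  unfolding R_def using step_same step_fwd step_bwd by fastforce

lemma R_mono: "(s,t) \<in> R\<^sup>+ \<Longrightarrow> occ s \<le> occ t \<and> s < t \<and> t < length cs"
proof (induction rule: trancl_induct)
  case (base y) then show ?case using R_step by (auto simp: R_def)
next
  case (step y z) then show ?case using R_step[of y z] by (auto simp: R_def)
qed

lemma R_fwd: "(s,t) \<in> R\<^sup>+ \<Longrightarrow> occ t \<le> occ s \<Longrightarrow> (cs ! s, cs ! t) \<in> Ori\<^sup>+"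
proof (induction rule: trancl_induct)
  case (base y)
  then show ?case unfolding R_def using step_same[of s y] step_bwd[of s y] by fastforce
next
  case (step y z)
  have "occ s \<le> occ y" using R_mono[OF step.hyps(1)] by simp
  moreover have "occ y \<le> occ z" using R_step[OF step.hyps(2)] .
  ultimately have "occ y \<le> occ s" "occ z \<le> occ y" using step.prems by auto
  then have "(cs ! s, cs ! y) \<in> Ori\<^sup>+" using step.IH by simp
  moreover have "(cs ! y, cs ! z) \<in> Ori"
    using step.hyps(2) \<open>occ z \<le> occ y\<close> unfolding R_def
    using step_same[of y z] step_bwd[of y z] by fastforce
  ultimately show ?case by simp
qed

lemma path_cnt: "(x,y) \<in> Ori\<^sup>* \<Longrightarrow> t \<le> length cs \<Longrightarrow> cnt y (take t cs) \<le> cnt x (take t cs)"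
proof (induction rule: rtrancl_induct)
  case base then show ?case by simp
next
  case (step y z) then show ?case using inv[of y z t] by simp
qed

end


theorem proposition8:
  fixes V :: "'a set" and E :: "'a set set" and v w :: 'a
    and Ori :: "('a \<times> 'a) set" and cs :: "'a list"
  assumes "simple_graph V E" and "connected_graph V E"
    and "cycle_edge E v w"
    and "Ori \<in> Acyc E" and "ord_le Ori v w"
    and "click_seq V Ori cs"
    and "length (filter (\<lambda>x. x = w) cs) = 1"
    and "\<forall>i j. i < j \<and> j < length cs \<and> cs ! i = w \<longrightarrow> cs ! j \<notin> interval Ori v w"
  shows "\<exists>cs'. length cs' = length cs \<and> click_seq V Ori cs' \<and>
     (\<exists>p q. \<forall>j < length cs'. (cs' ! j \<in> interval Ori v w \<longleftrightarrow> p \<le> j \<and> j \<le> q)) \<and>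
     apply_clicks cs Ori = apply_clicks cs' Ori"
proof -
  have ori: "orientation E Ori" and acyc: "acyclic Ori" using assms(4) by (auto simp: Acyc_def)
  interpret C: cs_ctx V E Ori cs using ori assms(6) by unfold_locales
  define I where "I = interval Ori v w"
  define n where "n = length cs"
  have vw_star: "(v,w) \<in> Ori\<^sup>*" using assms(5) by (simp add: ord_le_def)
  have vw: "(v,w) \<in> Ori"
  proof -
    have e: "{v,w} \<in> E" "v \<noteq> w" using assms(3) by (auto simp: cycle_edge_def)
    have "(w,v) \<notin> Ori"
    proof
      assume "(w,v) \<in> Ori"
      then have "(w,w) \<in> Ori\<^sup>+" using vw_star by (rule rtrancl_into_trancl2)
      then show False using acyc by (simp add: acyclic_def)
    qed
    then show ?thesis using ori e unfolding orientation_def by blast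
  qed
  have "card {i. i < n \<and> cs ! i = w} = 1"
    using assms(7) by (simp add: length_filter_conv_card n_def)
  then obtain k where kset: "{i. i < n \<and> cs ! i = w} = {k}" by (auto simp: card_1_singleton_iff)
  then have kn: "k < n" and ck: "cs ! k = w" and kuniq: "\<And>i. i < n \<Longrightarrow> cs ! i = w \<Longrightarrow> i = k"
    by auto
  have wI: "w \<in> I" using vw_star by (simp add: I_def interval_def ord_le_def)
  have after: "\<And>j. k < j \<Longrightarrow> j < n \<Longrightarrow> cs ! j \<notin> I"
    using assms(8) ck unfolding I_def n_def by blast
  have cw: "cnt w (take k cs) = 0"
  proof -
    have "w \<notin> set (take k cs)"
    proof
      assume "w \<in> set (take k cs)"
      then obtain i where "i < length (take k cs)" "take k cs ! i = w" by (auto simp: in_set_conv_nth)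
      then show False using kuniq[of i] kn by simp
    qed
    then show ?thesis by (simp add: cnt_zero)
  qed
  have cv: "cnt v (take k cs) \<le> 1"
    using C.inv[OF vw, of k] kn cw unfolding n_def by simp
  have cI: "cnt x (take k cs) \<le> 1" if "x \<in> I" for x
  proof -
    have "(v,x) \<in> Ori\<^sup>*" using that by (simp add: I_def interval_def ord_le_def)
    then show ?thesis using C.path_cnt[of v x k] kn cv unfolding n_def by simp
  qed
  have occ0: "C.occ s = 0" if "s < n" "cs ! s \<in> I" for s
  proof (cases "s < k")
    case True
    have "cnt (cs ! s) (take (Suc s) cs) \<le> cnt (cs ! s) (take k cs)"
      using True by (intro cnt_take_mono) simp
    then show ?thesis using cI[OF that(2)] cnt_take_Suc[of s cs "cs ! s"] that(1)
      unfolding C.occ_def n_def by simp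
  next
    case False
    then have "s = k" using after[of s] that by fastforce
    then show ?thesis using cw ck unfolding C.occ_def by simp
  qed
  have key: "cs ! t \<in> I" if st: "(s,t) \<in> C.R\<^sup>+" and tu: "(t,u) \<in> C.R\<^sup>+"
    and sI: "cs ! s \<in> I" and uI: "cs ! u \<in> I" for s t u
  proof -
    have m1: "C.occ s \<le> C.occ t" "s < t" "t < n" using C.R_mono[OF st] n_def by auto
    have m2: "C.occ t \<le> C.occ u" "u < n" using C.R_mono[OF tu] n_def by auto
    have "C.occ s = 0" "C.occ u = 0" using occ0 sI uI m1 m2 by auto
    then have "C.occ t \<le> C.occ s" "C.occ u \<le> C.occ t" using m1 m2 by auto
    then have p1: "(cs ! s, cs ! t) \<in> Ori\<^sup>+" and p2: "(cs ! t, cs ! u) \<in> Ori\<^sup>+"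
      using C.R_fwd st tu by auto
    have "(v, cs ! s) \<in> Ori\<^sup>*" "(cs ! u, w) \<in> Ori\<^sup>*"
      using sI uI by (auto simp: I_def interval_def ord_le_def)
    then have "(v, cs ! t) \<in> Ori\<^sup>*" "(cs ! t, w) \<in> Ori\<^sup>*" using p1 p2
      by (meson rtrancl_trans trancl_into_rtrancl)+
    then show ?thesis by (simp add: I_def interval_def ord_le_def)
  qed
  define cls :: "nat \<Rightarrow> nat" where
    "cls t = (if cs ! t \<in> I then 1 else if (\<exists>u. (t,u) \<in> C.R\<^sup>+ \<and> cs ! u \<in> I) then 0 else 2)" for t
  have clsb: "cls t \<le> 2" for t by (simp add: cls_def)
  have clsord: "cls s \<le> cls t" if "(s,t) \<in> C.R" for s t
  proof -
    have st: "(s,t) \<in> C.R\<^sup>+" using that by simp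
    show ?thesis
    proof (cases "cs ! s \<in> I")
      case True
      show ?thesis
      proof (cases "cs ! t \<in> I")
        case False
        then have "\<not> (\<exists>u. (t,u) \<in> C.R\<^sup>+ \<and> cs ! u \<in> I)" using key[OF st] True by blast
        then show ?thesis using True False by (simp add: cls_def)
      qed (simp add: cls_def True)
    next
      case sI: False
      show ?thesis
      proof (cases "\<exists>u. (s,u) \<in> C.R\<^sup>+ \<and> cs ! u \<in> I")
        case True then show ?thesis using sI by (simp add: cls_def)
      next
        case False
        then have "cs ! t \<notin> I" "\<not> (\<exists>u. (t,u) \<in> C.R\<^sup>+ \<and> cs ! u \<in> I)"
          using st by (auto intro: trancl_trans)
        then show ?thesis using sI False by (simp add: cls_def)
      qed
    qed
  qed
  define P0 where "P0 = filter (\<lambda>t. cls t = 0) [0..<n]"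
  define P1 where "P1 = filter (\<lambda>t. cls t = 1) [0..<n]"
  define P2 where "P2 = filter (\<lambda>t. cls t = 2) [0..<n]"
  define L where "L = P0 @ P1 @ P2"
  have cls012: "cls x = 0 \<or> cls x = 1 \<or> cls x = 2" for x using clsb[of x] by linarith
  have dL: "distinct L" by (auto simp: L_def P0_def P1_def P2_def)
  have sL: "set L = {..<length cs}"
  proof (rule set_eqI)
    fix x show "x \<in> set L \<longleftrightarrow> x \<in> {..<length cs}"
      using cls012[of x] by (auto simp: L_def P0_def P1_def P2_def n_def)
  qed
  have flt: "filter (\<lambda>t. cs!t = y \<or> cs!t = c) L = filter (\<lambda>t. cs!t = y \<or> cs!t = c) [0..<length cs]"
    if "y = c \<or> (y,c) \<in> Ori \<or> (c,y) \<in> Ori" for y c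
    unfolding L_def P0_def P1_def P2_def n_def
  proof (rule blocks_filter[OF _ clsb])
    fix s t assume "s < t" "t < length cs" "cs ! s = y \<or> cs ! s = c" "cs ! t = y \<or> cs ! t = c"
    then have "(s,t) \<in> C.R" using that unfolding C.R_def by auto
    then show "cls s \<le> cls t" by (rule clsord)
  qed
  define cs' where "cs' = map (nth cs) L"
  have v1: "click_seq V Ori cs'" and v2: "fold click cs' Ori = fold click cs Ori"
    using reorder[OF assms(6) dL sL flt] unfolding cs'_def by auto
  have lenL: "length L = n" using distinct_card[OF dL] sL n_def by simp
  have kP1: "k \<in> set P1" using kn ck wI by (simp add: P1_def cls_def)
  then have P1ne: "length P1 \<ge> 1" by (cases P1) auto
  have inI: "cs' ! j \<in> I \<longleftrightarrow> length P0 \<le> j \<and> j \<le> length P0 + length P1 - 1" if j: "j < length cs'" for j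
  proof -
    have jL: "j < length L" using j by (simp add: cs'_def)
    have c: "cs' ! j = cs ! (L ! j)" using jL by (simp add: cs'_def)
    have "cs ! (L ! j) \<in> I \<longleftrightarrow> cls (L ! j) = 1" by (simp add: cls_def)
    also have "\<dots> \<longleftrightarrow> length P0 \<le> j \<and> j < length P0 + length P1"
    proof (cases "j < length P0")
      case True
      then have "L ! j \<in> set P0" by (simp add: L_def nth_append)
      then show ?thesis using True by (simp add: P0_def)
    next
      case False
      show ?thesis
      proof (cases "j < length P0 + length P1")
        case True
        then have "L ! j = P1 ! (j - length P0)" "j - length P0 < length P1" using False by (auto simp: L_def nth_append)
        then have "L ! j \<in> set P1" by simp
        then show ?thesis using True False by (simp add: P1_def)
      next
        case False2: False
        then have "L ! j = P2 ! (j - length P0 - length P1)" "j - length P0 - length P1 < length P2"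
          using False jL by (auto simp: L_def nth_append)
        then have "L ! j \<in> set P2" by simp
        then show ?thesis using False2 by (simp add: P2_def)
      qed
    qed
    finally show ?thesis using c P1ne by auto
  qed
  show ?thesis
  proof (intro exI conjI)
    show "length cs' = length cs" using lenL n_def by (simp add: cs'_def)
    show "click_seq V Ori cs'" by (rule v1)
    show "\<forall>j < length cs'. (cs' ! j \<in> interval Ori v w \<longleftrightarrow> length P0 \<le> j \<and> j \<le> length P0 + length P1 - 1)"
      using inI unfolding I_def by blast
    show "apply_clicks cs Ori = apply_clicks cs' Ori" using v2 by (simp add: apply_clicks_def)
  qed
qed

end
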